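(* 1. There exists an infinite word whose letter frequencies all exist and are rational but which is not weak abelian periodic. 2. If an infinite word $w$ over a finite alphabet has a letter whose frequency in $w$ exists and is irrational, then $w$ is not weak abelian periodic. 3. If an infinite binary word $w$ does not have frequencies of letters, then $w$ is weak abelian periodic. 4. There exists an infinite ternary word which does not have frequencies of letters and which is not weak abelian periodic.
   Context: For a finite word $u$, $|u|_a$ is the number of occurrences of the letter $a$ in $u$, and $\rho_a(u)=|u|_a/|u|$ for nonempty $u$. For an infinite word $w$, the frequency of a letter $a$ in $w$ is $\rho_a(w)=\lim_{n\to\infty}\rho_a(\mathrm{pref}_n(w))$ when this limit exists, where $\mathrm{pref}_n(w)$ is the prefix of length $n$; $w$ "does not have frequencies of letters" if this limit fails to exist for some letter. An infinite word $w$ over a finite alphabet $\Sigma$ is weak abelian periodic if $w=v_0v_1v_2\cdots$ with $v_0$ finite and $v_1,v_2,\dots$ nonempty finite words such that $\rho_a(v_i)=\rho_a(v_j)$ for all $a\in\Sigma$ and all $i,j\ge1$. *)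

theory Defs
  imports Complex_Main
begin

definition rho :: "'a \<Rightarrow> 'a list \<Rightarrow> real" where
  "rho a u = real (count_list u a) / real (length u)"

definition pref :: "nat \<Rightarrow> (nat \<Rightarrow> 'a) \<Rightarrow> 'a list" where
  "pref n w = map w [0..<n]"

definition has_letter_frequencies :: "'a set \<Rightarrow> (nat \<Rightarrow> 'a) \<Rightarrow> bool" where
  "has_letter_frequencies \<Sigma> w = (\<forall>a\<in>\<Sigma>. convergent (\<lambda>n. rho a (pref n w)))"

text \<open>w = v_0 v_1 v_2 ... : every finite concatenation v_0 ... v_(n-1) is a prefix of w.
  Since v_i is nonempty for i >= 1, this determines w completely.\<close>
definition weak_abelian_periodic :: "'a set \<Rightarrow> (nat \<Rightarrow> 'a) \<Rightarrow> bool" where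
  "weak_abelian_periodic \<Sigma> w =
    (\<exists>v :: nat \<Rightarrow> 'a list.
       (\<forall>i\<ge>1. v i \<noteq> []) \<and>
       (\<forall>n. pref (length (concat (map v [0..<n]))) w = concat (map v [0..<n])) \<and>
       (\<forall>a\<in>\<Sigma>. \<forall>i\<ge>1. \<forall>j\<ge>1. rho a (v i) = rho a (v j)))"

end

theory Submission
  imports Defs "HOL-Library.Infinite_Set"
begin


lemma length_pref[simp]: "length (pref n w) = n" by (simp add: pref_def)
lemma pref_0[simp]: "pref 0 w = []" by (simp add: pref_def)
lemma pref_Suc: "pref (Suc n) w = pref n w @ [w n]" by (simp add: pref_def)
lemma count_pref_Suc:
  "count_list (pref (Suc n) w) a = count_list (pref n w) a + (if w n = a then 1 else 0)"
  by (simp add: pref_Suc)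
lemma count_pref_mono: "m \<le> n \<Longrightarrow> count_list (pref m w) a \<le> count_list (pref n w) a"
  by (induction n) (auto simp: count_pref_Suc le_Suc_eq)
lemma pref_split: "m \<le> n \<Longrightarrow> pref n w = pref m w @ map w [m..<n]"
  by (metis le_add_diff_inverse map_append pref_def upt_add_eq_append zero_le)

lemma count_two: "set xs \<subseteq> {a,b} \<Longrightarrow> a \<noteq> b \<Longrightarrow> count_list xs a + count_list xs b = length xs"
  by (induction xs) auto

lemma rho_rat: "rho a u \<in> \<rat>" by (simp add: rho_def)

lemma len_concat_ge:
  assumes "\<forall>i\<ge>1. v i \<noteq> []"
  shows "length (concat (map v [0..<Suc n])) \<ge> length (v 0) + n"
proof (induction n)
  case 0 then show ?case by simp
next
  case (Suc n)
  have "v (Suc n) \<noteq> []" using assms by simp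
  then have "length (v (Suc n)) \<ge> 1" by (cases "v (Suc n)") auto
  then show ?case using Suc by simp
qed

lemma wap_limit:
  assumes v1: "\<forall>i\<ge>1. v i \<noteq> []"
    and v2: "\<forall>n. pref (length (concat (map v [0..<n]))) w = concat (map v [0..<n])"
    and v3: "\<forall>i\<ge>1. \<forall>j\<ge>1. rho a (v i) = rho a (v j)"
    and lim: "(\<lambda>n. rho a (pref n w)) \<longlonglongrightarrow> r"
  shows "r = rho a (v 1)"
proof -
  define g where "g n = length (concat (map v [0..<Suc n]))" for n
  define q where "q = rho a (v 1)"
  have cnt: "real (count_list (v i) a) = q * real (length (v i))" if "i \<ge> 1" for i
  proof -
    have "rho a (v i) = rho a (v 1)" using v3 that by blast
    then have "rho a (v i) = q" by (simp add: q_def)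
    moreover have "length (v i) > 0" using v1 that by simp
    ultimately have "real (count_list (v i) a) / real (length (v i)) = q" by (simp add: rho_def)
    then show ?thesis using \<open>length (v i) > 0\<close> by (simp add: divide_eq_eq)
  qed
  define c0 where "c0 = real (count_list (v 0) a)"
  define l0 where "l0 = real (length (v 0))"
  have pg: "pref (g n) w = concat (map v [0..<Suc n])" for n
    unfolding g_def by (rule v2[rule_format])
  have key: "real (count_list (concat (map v [0..<Suc n])) a) = c0 + q * (real (g n) - l0)" for n
  proof (induction n)
    case 0
    then show ?case by (simp add: c0_def l0_def g_def)
  next
    case (Suc n)
    have "g (Suc n) = g n + length (v (Suc n))" by (simp add: g_def)
    then show ?case using Suc.IH cnt[of "Suc n"] by (simp add: algebra_simps)
  qed
  have gge: "g n \<ge> n" for n using len_concat_ge[OF v1, of n] by (simp add: g_def)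
  have sm: "strict_mono g"
  unfolding strict_mono_Suc_iff
  proof
    fix n :: nat
    have "v (Suc n) \<noteq> []" using v1 by simp
    then show "g n < g (Suc n)" by (simp add: g_def)
  qed
  have l1: "((\<lambda>n. rho a (pref n w)) \<circ> g) \<longlonglongrightarrow> r" using LIMSEQ_subseq_LIMSEQ[OF lim sm] .
  have "filterlim (\<lambda>n. real (g n)) at_top sequentially"
    by (rule filterlim_compose[OF filterlim_real_sequentially filterlim_subseq[OF sm]])
  then have ginf: "filterlim (\<lambda>n. real (g n)) at_infinity sequentially"
    by (rule filterlim_at_top_imp_at_infinity)
  have "(\<lambda>n. q + (c0 - q * l0) / real (g n)) \<longlonglongrightarrow> q + 0"
    by (intro tendsto_add tendsto_const tendsto_divide_0[OF tendsto_const ginf])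
  then have lim0: "(\<lambda>n. q + (c0 - q * l0) / real (g n)) \<longlonglongrightarrow> q" by simp
  have ev: "\<forall>\<^sub>F n in sequentially. q + (c0 - q * l0) / real (g n) = ((\<lambda>n. rho a (pref n w)) \<circ> g) n"
    unfolding eventually_sequentially
  proof (intro exI[of _ 1] allI impI)
    fix n :: nat assume "n \<ge> 1"
    then have gp: "real (g n) > 0" using gge[of n] by simp
    have "((\<lambda>n. rho a (pref n w)) \<circ> g) n = real (count_list (pref (g n) w) a) / real (g n)"
      by (simp add: rho_def)
    also have "\<dots> = (c0 + q * (real (g n) - l0)) / real (g n)"
      by (simp only: pg key)
    also have "\<dots> = q + (c0 - q * l0) / real (g n)" using gp by (simp add: field_simps)
    finally show "q + (c0 - q * l0) / real (g n) = ((\<lambda>n. rho a (pref n w)) \<circ> g) n" by simp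
  qed
  have "((\<lambda>n. rho a (pref n w)) \<circ> g) \<longlonglongrightarrow> q"
    by (rule Lim_transform_eventually[OF lim0 ev])
  from LIMSEQ_unique[OF l1 this] show ?thesis by (simp add: q_def)
qed

lemma sq_le_pow: "j * j \<le> 2 * 2 ^ j"
proof -
  have aux: "2 * j + 1 \<le> 2 * 2 ^ j" for j :: nat
  proof (induction j)
    case 0 then show ?case by simp
  next
    case (Suc j)
    have "1 \<le> (2::nat) ^ j" by simp
    moreover have "2 * 2 ^ Suc j = 4 * (2::nat) ^ j" by simp
    moreover have "2 * Suc j + 1 = (2 * j + 1) + 2" by simp
    ultimately show ?case using Suc.IH by linarith
  qed
  show ?thesis
  proof (induction j)
    case 0 then show ?case by simp
  next
    case (Suc j) then show ?case using aux[of j] by simp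
  qed
qed

locale pow2word =
  fixes w :: "nat \<Rightarrow> 'a" and a :: 'a
  assumes pos: "\<And>n. w n = a \<longleftrightarrow> (\<exists>j. n = 2 ^ j)"
begin

lemma cnt_le: "n \<le> 2 ^ j \<Longrightarrow> count_list (pref n w) a \<le> j"
proof (induction n arbitrary: j)
  case 0 then show ?case by simp
next
  case (Suc n)
  show ?case
  proof (cases "w n = a")
    case True
    then obtain k where k: "n = 2 ^ k" using pos by blast
    have "k < j"
    proof (rule ccontr)
      assume "\<not> k < j"
      then have "(2::nat) ^ j \<le> 2 ^ k" by (intro power_increasing) auto
      then show False using Suc.prems k by linarith
    qed
    then obtain j' where j': "j = Suc j'" "k \<le> j'" by (cases j) auto
    then have "n \<le> 2 ^ j'" using k by simp
    then have "count_list (pref n w) a \<le> j'" using Suc.IH by blast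
    then show ?thesis using True j' by (simp add: count_pref_Suc)
  next
    case False
    then show ?thesis using Suc by (simp add: count_pref_Suc)
  qed
qed

lemma cnt_sq: "count_list (pref n w) a * count_list (pref n w) a \<le> 4 * n"
proof (cases "n = 0")
  case True then show ?thesis by simp
next
  case False
  have ex: "\<exists>j. n \<le> 2 ^ j" using less_exp[of n] by (meson less_imp_le)
  define j where "j = (LEAST j. n \<le> 2 ^ j)"
  have j1: "n \<le> 2 ^ j" unfolding j_def using LeastI_ex[OF ex] .
  have c: "count_list (pref n w) a \<le> j" using cnt_le[OF j1] .
  have cc: "count_list (pref n w) a * count_list (pref n w) a \<le> j * j" using c mult_le_mono by blast
  show ?thesis
  proof (cases j)
    case 0 then show ?thesis using cc by simp
  next
    case (Suc k)
    have "k < (LEAST j. n \<le> 2 ^ j)" using Suc j_def by simp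
    then have "\<not> n \<le> 2 ^ k" by (rule not_less_Least)
    then have "2 * 2 ^ j < 4 * n" using Suc by simp
    then show ?thesis using cc sq_le_pow[of j] by linarith
  qed
qed

lemma rho_to_0: "(\<lambda>n. rho a (pref n w)) \<longlonglongrightarrow> 0"
proof (rule tendsto_sandwich[where f = "\<lambda>_. 0" and h = "\<lambda>n. 2 * sqrt (inverse (real n))"])
  show "\<forall>\<^sub>F n in sequentially. 0 \<le> rho a (pref n w)" by (simp add: rho_def)
  show "\<forall>\<^sub>F n in sequentially. rho a (pref n w) \<le> 2 * sqrt (inverse (real n))"
    unfolding eventually_sequentially
  proof (intro exI allI impI)
    fix n :: nat assume "n \<ge> 1"
    define c where "c = real (count_list (pref n w) a)"
    have "c * c \<le> 4 * real n" unfolding c_def using cnt_sq[of n]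
      by (metis of_nat_le_iff of_nat_mult of_nat_numeral)
    then have "c \<le> sqrt (4 * real n)" by (simp add: c_def real_le_rsqrt power2_eq_square)
    also have "\<dots> = 2 * sqrt (real n)" by (simp add: real_sqrt_mult)
    finally have "c \<le> 2 * sqrt (real n)" .
    have sp: "sqrt (real n) > 0" using \<open>n \<ge> 1\<close> by simp
    have "c * sqrt (real n) \<le> 2 * sqrt (real n) * sqrt (real n)"
      using \<open>c \<le> 2 * sqrt (real n)\<close> sp by (intro mult_right_mono) auto
    also have "\<dots> = 2 * real n" by simp
    finally have "c * sqrt (real n) \<le> 2 * real n" .
    then have "rho a (pref n w) \<le> 2 / sqrt (real n)"
      unfolding rho_def c_def[symmetric] using \<open>sqrt (real n) > 0\<close> \<open>n \<ge> 1\<close>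
      by (simp add: field_simps)
    then show "rho a (pref n w) \<le> 2 * sqrt (inverse (real n))"
      by (simp add: real_sqrt_inverse divide_inverse)
  qed
  show "(\<lambda>_. 0::real) \<longlonglongrightarrow> 0" by simp
  have "(\<lambda>n. 2 * sqrt (inverse (real n))) \<longlonglongrightarrow> 2 * sqrt 0"
    by (intro tendsto_mult tendsto_const tendsto_real_sqrt lim_inverse_n)
  then show "(\<lambda>n. 2 * sqrt (inverse (real n))) \<longlonglongrightarrow> 0" by simp
qed

lemma cnt_ge: "count_list (pref (Suc (2 ^ j)) w) a \<ge> Suc j"
proof (induction j)
  case 0
  have "w 1 = a" using pos[of 1] by (metis power_0)
  then show ?case by (simp add: count_pref_Suc)
next
  case (Suc j)
  have "w (2 ^ Suc j) = a" using pos by blast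
  then have "count_list (pref (Suc (2 ^ Suc j)) w) a = count_list (pref (2 ^ Suc j) w) a + 1"
    by (simp add: count_pref_Suc del: power_Suc)
  moreover have "count_list (pref (Suc (2 ^ j)) w) a \<le> count_list (pref (2 ^ Suc j) w) a"
    by (rule count_pref_mono) simp
  ultimately show ?case using Suc by simp
qed

lemma not_wap: "a \<in> \<Sigma> \<Longrightarrow> \<not> weak_abelian_periodic \<Sigma> w"
proof
  assume aS: "a \<in> \<Sigma>" and "weak_abelian_periodic \<Sigma> w"
  then obtain v where v1: "\<forall>i\<ge>1. v i \<noteq> []"
    and v2: "\<forall>n. pref (length (concat (map v [0..<n]))) w = concat (map v [0..<n])"
    and v3a: "\<forall>c\<in>\<Sigma>. \<forall>i\<ge>1. \<forall>j\<ge>1. rho c (v i) = rho c (v j)"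
    unfolding weak_abelian_periodic_def by (elim exE conjE)
  have v3: "\<forall>i\<ge>1. \<forall>j\<ge>1. rho a (v i) = rho a (v j)" using v3a aS by (rule bspec)
  have r0: "rho a (v 1) = 0" using wap_limit[OF v1 v2 v3 rho_to_0] by simp
  have z: "count_list (v i) a = 0" if "i \<ge> 1" for i
  proof -
    have "rho a (v i) = rho a (v 1)" using v3 that by blast
    then have "rho a (v i) = 0" using r0 by simp
    moreover have "length (v i) > 0" using v1 that by simp
    ultimately show ?thesis by (simp add: rho_def)
  qed
  have cc: "count_list (concat (map v [0..<Suc n])) a = count_list (v 0) a" for n
    by (induction n) (use z in auto)
  define k where "k = count_list (v 0) a"
  define N where "N = Suc (2 ^ k)"
  define g where "g = length (concat (map v [0..<Suc N]))"
  have "g \<ge> N" using len_concat_ge[OF v1, of N] by (simp add: g_def)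
  then have "count_list (pref N w) a \<le> count_list (pref g w) a" by (rule count_pref_mono)
  also have "\<dots> = k"
  proof -
    have "pref g w = concat (map v [0..<Suc N])" unfolding g_def by (rule v2[rule_format])
    then show ?thesis using cc[of N] by (simp add: k_def)
  qed
  finally show False using cnt_ge[of k] N_def by simp
qed

end



lemma osc:
  fixes x :: "nat \<Rightarrow> real"
  assumes b0: "\<And>n. 0 \<le> x n" and b1: "\<And>n. x n \<le> 1" and nc: "\<not> convergent x"
  shows "\<exists>q\<in>\<rat>. (\<forall>N. \<exists>n\<ge>N. x n > q) \<and> (\<forall>N. \<exists>n\<ge>N. x n < q)"
proof (rule ccontr)
  assume H: "\<not> ?thesis"
  have H': "(\<exists>N. \<forall>n\<ge>N. x n \<le> q) \<or> (\<exists>N. \<forall>n\<ge>N. q \<le> x n)" if "q \<in> \<rat>" for q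
    using H that by (meson not_le)
  define A where "A = {y. \<exists>N. \<forall>n\<ge>N. y \<le> x n}"
  have A0: "0 \<in> A" using b0 by (auto simp: A_def)
  have Ab: "bdd_above A" unfolding bdd_above_def
  proof (intro exI ballI)
    fix y assume "y \<in> A"
    then obtain N where "\<forall>n\<ge>N. y \<le> x n" by (auto simp: A_def)
    then show "y \<le> 1" using b1[of N] by force
  qed
  define L where "L = Sup A"
  have "x \<longlonglongrightarrow> L"
  proof (rule LIMSEQ_I)
    fix r :: real assume r: "0 < r"
    obtain q where q: "q \<in> \<rat>" "L < q" "q < L + r" using Rats_dense_in_real[of L "L + r"] r by auto
    have "q \<notin> A" using cSup_upper[OF _ Ab] q(2) L_def by force
    then obtain N1 where N1: "\<forall>n\<ge>N1. x n \<le> q" using H'[OF q(1)] by (auto simp: A_def)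
    have "L - r < Sup A" using r L_def by simp
    then obtain y where y: "y \<in> A" "L - r < y" using less_cSupD[of A] A0 by blast
    then obtain N2 where N2: "\<forall>n\<ge>N2. y \<le> x n" by (auto simp: A_def)
    show "\<exists>no. \<forall>n\<ge>no. norm (x n - L) < r"
    proof (intro exI allI impI)
      fix n assume "n \<ge> max N1 N2"
      then have "x n \<le> q" "y \<le> x n" using N1 N2 by auto
      then show "norm (x n - L) < r" using q y by auto
    qed
  qed
  then show False using nc convergentI by blast
qed

lemma discrete_ivt:
  fixes f :: "nat \<Rightarrow> int"
  shows "f n1 > 0 \<Longrightarrow> f n2 \<le> 0 \<Longrightarrow> n1 \<le> n2 \<Longrightarrow> \<exists>k. n1 \<le> k \<and> k < n2 \<and> f k > 0 \<and> f (Suc k) \<le> 0"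
proof (induction n2)
  case 0 then show ?case by simp
next
  case (Suc m)
  show ?case
  proof (cases "n1 \<le> m")
    case True
    show ?thesis
    proof (cases "f m \<le> 0")
      case True
      then show ?thesis using Suc \<open>n1 \<le> m\<close> by (meson less_SucI)
    next
      case False
      then show ?thesis using Suc \<open>n1 \<le> m\<close> by auto
    qed
  next
    case False
    then have "n1 = Suc m" using Suc by simp
    then show ?thesis using Suc by simp
  qed
qed

lemma frac_cmp: fixes p m C :: int and n :: nat
  assumes "0 < m" "0 < n"
  shows "(real_of_int p / real_of_int m < real_of_int C / real n) \<longleftrightarrow> (p * int n < C * m)"
  by (smt (verit) assms(1,2) nonzero_mult_div_cancel_right of_int_less_iff
    of_int_mult of_int_of_nat_eq of_int_pos of_nat_0_less_iff
    of_nat_less_0_iff pos_divide_less_eq times_divide_eq_left)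

lemma frac_cmp2: fixes p m C :: int and n :: nat
  assumes m: "0 < m" and n: "0 < n"
  shows "(real_of_int C / real n < real_of_int p / real_of_int m) \<longleftrightarrow> (C * m < p * int n)"
proof -
  have "(real_of_int C / real n < real_of_int p / real_of_int m) \<longleftrightarrow> real_of_int C < real_of_int p / real_of_int m * real n"
    using n by (simp add: pos_divide_less_eq)
  also have "\<dots> \<longleftrightarrow> real_of_int C < (real_of_int p * real n) / real_of_int m" by simp
  also have "\<dots> \<longleftrightarrow> real_of_int C * real_of_int m < real_of_int p * real n"
    using m by (simp add: pos_less_divide_eq)
  also have "\<dots> \<longleftrightarrow> real_of_int (C * m) < real_of_int (p * int n)" by simp
  also have "\<dots> \<longleftrightarrow> C * m < p * int n" by (rule of_int_less_iff)
  finally show ?thesis .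
qed

lemma binary_wap:
  assumes ab: "a \<noteq> b" and rw: "range w \<subseteq> {a,b}" and nc: "\<not> convergent (\<lambda>n. rho a (pref n w))"
  shows "weak_abelian_periodic {a,b} w"
proof -
  define x where "x n = rho a (pref n w)" for n
  have x0: "0 \<le> x n" for n by (simp add: x_def rho_def)
  have x1: "x n \<le> 1" for n
    using count_le_length[of "pref n w" a] by (cases n) (auto simp: x_def rho_def)
  have x00: "x 0 = 0" by (simp add: x_def rho_def)
  obtain q where q: "q \<in> \<rat>" and qa: "\<forall>N. \<exists>n\<ge>N. x n > q" and qb: "\<forall>N. \<exists>n\<ge>N. x n < q"
  proof -
    have "x = (\<lambda>n. rho a (pref n w))" by (simp add: x_def[abs_def])
    then have "\<not> convergent x" using nc by simp
    from osc[OF x0 x1 this] show ?thesis using that by blast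
  qed
  have qpos: "q > 0"
  proof -
    obtain n where "x n < q" using qb by blast
    then show ?thesis using x0[of n] by linarith
  qed
  obtain p m :: int where m: "0 < m" and qpm: "q = of_int p / of_int m"
  proof (rule Rats_cases'[OF q])
    fix a b :: int assume "0 < b" "coprime a b" "q = of_int a / of_int b"
    then show thesis using that by blast
  qed
  have p: "0 < p" using qpos m qpm by (simp add: zero_less_divide_iff)
  define C where "C n = int (count_list (pref n w) a)" for n
  define f where "f n = m * C n - p * int n" for n
  have xf: "x n = real_of_int (C n) / real n" for n by (simp add: x_def rho_def C_def)
  have fpos: "f n > 0" if "x n > q" for n
  proof -
    have "n > 0" using that x00 qpos by (cases n) auto
    then have "real_of_int p / real_of_int m < real_of_int (C n) / real n" using that xf qpm by simp
    then have "p * int n < C n * m" using frac_cmp[OF m \<open>n > 0\<close>] by blast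
    then show ?thesis by (simp add: f_def algebra_simps)
  qed
  have fneg: "f n < 0" if "x n < q" "n > 0" for n
  proof -
    have "real_of_int (C n) / real n < real_of_int p / real_of_int m" using that xf qpm by simp
    then have "C n * m < p * int n" using frac_cmp2[OF m that(2)] by blast
    then show ?thesis by (simp add: f_def algebra_simps)
  qed
  have fstep: "f (Suc k) \<ge> f k - p" for k
  proof -
    have "C k \<le> C (Suc k)" unfolding C_def using count_pref_mono[of k "Suc k" w a] by simp
    then have "m * C k \<le> m * C (Suc k)" using m by simp
    then show ?thesis by (simp add: f_def algebra_simps)
  qed
  define B where "B = {n. - p < f n \<and> f n \<le> 0}"
  have Binf: "infinite B" unfolding infinite_nat_iff_unbounded_le
  proof
    fix N
    obtain n1 where n1: "n1 \<ge> N" "x n1 > q" using qa by blast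
    obtain n2 where n2: "n2 \<ge> Suc n1" "x n2 < q" using qb by blast
    have "f n1 > 0" using fpos n1 by blast
    moreover have "f n2 \<le> 0" using fneg[of n2] n2 by simp
    ultimately obtain k where k: "n1 \<le> k" "f k > 0" "f (Suc k) \<le> 0"
      using discrete_ivt[of f n1 n2] n2 by auto
    have "Suc k \<in> B" using k fstep[of k] by (simp add: B_def)
    then show "\<exists>n\<ge>N. n \<in> B" using k n1 by (intro exI[of _ "Suc k"]) auto
  qed
  have "finite (f ` B)"
    by (rule finite_subset[of _ "{-p<..0}"]) (auto simp: B_def)
  then obtain n0 where "n0 \<in> B" and inf: "infinite {n \<in> B. f n = f n0}"
    using pigeonhole_infinite[OF Binf] by blast
  then obtain e :: "nat \<Rightarrow> nat" where e: "strict_mono e" and eC: "\<And>i. e i \<in> {n \<in> B. f n = f n0}"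
    using infinite_enumerate[OF inf] by blast
  have fe: "f (e i) = f (e j)" for i j using eC[of i] eC[of j] by simp
  define v where "v i = (if i = 0 then pref (e 0) w else map w [e (i - 1)..<e i])" for i
  have eS: "e i < e (Suc i)" for i using e by (simp add: strict_mono_def)
  have vS: "v (Suc i) = map w [e i..<e (Suc i)]" for i by (simp add: v_def)
  have vcat: "concat (map v [0..<Suc n]) = pref (e n) w" for n
  proof (induction n)
    case 0 then show ?case by (simp add: v_def)
  next
    case (Suc n)
    have "concat (map v [0..<Suc (Suc n)]) = pref (e n) w @ v (Suc n)" using Suc by simp
    also have "\<dots> = pref (e (Suc n)) w" using pref_split[of "e n" "e (Suc n)" w] eS[of n] vS[of n] by simp
    finally show ?case .
  qed
  have v1: "\<forall>i\<ge>1. v i \<noteq> []"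
  proof (intro allI impI)
    fix i :: nat assume "i \<ge> 1"
    then obtain j where "i = Suc j" by (cases i) auto
    then show "v i \<noteq> []" using vS[of j] eS[of j] by simp
  qed
  have v2: "\<forall>n. pref (length (concat (map v [0..<n]))) w = concat (map v [0..<n])"
  proof
    fix n show "pref (length (concat (map v [0..<n]))) w = concat (map v [0..<n])"
    proof (cases n)
      case 0 then show ?thesis by simp
    next
      case (Suc n') then show ?thesis using vcat[of n'] by simp
    qed
  qed
  have ra: "rho a (v i) = q" if i1: "i \<ge> 1" for i
  proof -
    obtain j where j: "i = Suc j" using i1 by (cases i) auto
    have sp: "pref (e (Suc j)) w = pref (e j) w @ v (Suc j)"
      using pref_split[OF less_imp_le[OF eS[of j]], of w] vS[of j] by simp
    then have cc: "C (e (Suc j)) = C (e j) + int (count_list (v (Suc j)) a)" by (simp add: C_def)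
    have ll: "length (v (Suc j)) = e (Suc j) - e j" using vS[of j] by simp
    have "f (e (Suc j)) = f (e j)" by (rule fe)
    then have eqi: "m * int (count_list (v (Suc j)) a) = p * int (e (Suc j) - e j)"
      using cc eS[of j] by (simp add: f_def algebra_simps of_nat_diff)
    have "real_of_int m * real (count_list (v (Suc j)) a) = real_of_int p * real (e (Suc j) - e j)"
      using arg_cong[where f=real_of_int, OF eqi] by simp
    moreover have lne: "real (e (Suc j) - e j) \<noteq> 0" using eS[of j] by simp
    moreover have mne: "real_of_int m \<noteq> 0" using m by simp
    ultimately have "real (count_list (v (Suc j)) a) / real (e (Suc j) - e j) = real_of_int p / real_of_int m"
      unfolding frac_eq_eq[OF lne mne] by (simp add: mult.commute)
    then show ?thesis using j ll qpm by (simp add: rho_def)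
  qed
  have rb: "rho b (v i) = 1 - rho a (v i)" if i1: "i \<ge> 1" for i
  proof -
    have ne: "length (v i) > 0" using v1 i1 by simp
    have "set (v i) \<subseteq> {a,b}"
    proof -
      obtain j where "i = Suc j" using i1 by (cases i) auto
      then show ?thesis using vS[of j] rw by auto
    qed
    then have "count_list (v i) a + count_list (v i) b = length (v i)" using ab by (rule count_two)
    then have "real (count_list (v i) b) = real (length (v i)) - real (count_list (v i) a)" by simp
    then show ?thesis using ne by (simp add: rho_def diff_divide_distrib)
  qed
  have v3: "\<forall>c\<in>{a,b}. \<forall>i\<ge>1. \<forall>j\<ge>1. rho c (v i) = rho c (v j)"
    using ra rb by auto
  show ?thesis unfolding weak_abelian_periodic_def by (intro exI[of _ v] conjI v1 v2 v3)
qed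



definition w4 :: "nat \<Rightarrow> nat" where
  "w4 n = (if \<exists>j. n = 2 ^ j then 2 else if \<exists>j. even j \<and> 2 ^ j < n \<and> n < 2 ^ Suc j then 0 else 1)"

lemma w4_block:
  assumes "2 ^ j < n" "n < 2 ^ Suc j"
  shows "w4 n = (if even j then 0 else 1)"
proof -
  have np: "\<not> (\<exists>k. n = 2 ^ k)"
  proof
    assume "\<exists>k. n = 2 ^ k"
    then obtain k where k: "n = 2 ^ k" by blast
    have "j < k" using assms(1) k by (metis nat_power_less_imp_less zero_less_numeral)
    moreover have "k < Suc j" using assms(2) k by (metis nat_power_less_imp_less zero_less_numeral)
    ultimately show False by simp
  qed
  have uniq: "j' = j" if "2 ^ j' < n" "n < 2 ^ Suc j'" for j'
  proof -
    have "(2::nat) ^ j' < 2 ^ Suc j" using that assms by linarith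
    then have "j' < Suc j" by (metis nat_power_less_imp_less zero_less_numeral)
    moreover have "(2::nat) ^ j < 2 ^ Suc j'" using that assms by linarith
    then have "j < Suc j'" by (metis nat_power_less_imp_less zero_less_numeral)
    ultimately show ?thesis by simp
  qed
  show ?thesis
  proof (cases "even j")
    case True
    then show ?thesis using np assms unfolding w4_def by auto
  next
    case False
    then have "\<not> (\<exists>j'. even j' \<and> 2 ^ j' < n \<and> n < 2 ^ Suc j')" using uniq by blast
    then show ?thesis using np False unfolding w4_def by auto
  qed
qed

interpretation w4p: pow2word w4 2
proof
  fix n
  show "w4 n = 2 \<longleftrightarrow> (\<exists>j. n = 2 ^ j)" by (simp add: w4_def)
qed

lemma w4_cnt_k:
  "1 \<le> k \<Longrightarrow> k \<le> 2 ^ j \<Longrightarrow>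
   count_list (pref (2 ^ j + k) w4) 0 = count_list (pref (2 ^ j) w4) 0 + (if even j then k - 1 else 0)"
proof (induction k)
  case 0 then show ?case by simp
next
  case (Suc k)
  show ?case
  proof (cases "k = 0")
    case True
    have "w4 (2 ^ j) = 2" by (auto simp: w4_def)
    then show ?thesis using True by (simp add: count_pref_Suc)
  next
    case False
    have b1: "2 ^ j < 2 ^ j + k" using False by simp
    have b2: "2 ^ j + k < 2 ^ Suc j" using Suc.prems by simp
    have "count_list (pref (2 ^ j + Suc k) w4) 0 = count_list (pref (2 ^ j + k) w4) 0 + (if w4 (2 ^ j + k) = 0 then 1 else 0)"
      by (simp add: count_pref_Suc)
    then show ?thesis using Suc.IH Suc.prems False w4_block[OF b1 b2] by auto
  qed
qed

lemma w4_cnt: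
  "count_list (pref (2 ^ Suc j) w4) 0 = count_list (pref (2 ^ j) w4) 0 + (if even j then 2 ^ j - 1 else 0)"
  using w4_cnt_k[of "2 ^ j" j] by (simp add: mult_2)

lemma w4_nonconv: "\<not> convergent (\<lambda>n. rho 0 (pref n w4))"
proof
  assume "convergent (\<lambda>n. rho 0 (pref n w4))"
  then obtain L where L: "(\<lambda>n. rho 0 (pref n w4)) \<longlonglongrightarrow> L" by (auto simp: convergent_def)
  define c where "c j = real (count_list (pref (2 ^ j) w4) 0)" for j
  define x where "x j = rho 0 (pref (2 ^ j) w4)" for j
  have xc: "x j = c j / 2 ^ j" for j by (simp add: x_def c_def rho_def)
  have codd: "c (Suc (Suc (2 * k))) = c (Suc (2 * k))" for k
    using w4_cnt[of "Suc (2 * k)"] by (simp add: c_def)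
  have ceven: "c (Suc (2 * k)) = c (2 * k) + (2 ^ (2 * k) - 1)" for k
  proof -
    have h: "count_list (pref (2 ^ Suc (2 * k)) w4) 0 = count_list (pref (2 ^ (2 * k)) w4) 0 + (2 ^ (2 * k) - 1)"
      using w4_cnt[of "2 * k"] by simp
    have "(1::nat) \<le> 2 ^ (2 * k)" by simp
    then have h2: "real (2 ^ (2 * k) - 1 :: nat) = 2 ^ (2 * k) - 1" by (simp add: of_nat_diff)
    have "c (Suc (2 * k)) = real (count_list (pref (2 ^ (2 * k)) w4) 0) + real (2 ^ (2 * k) - 1 :: nat)"
      unfolding c_def h by (rule of_nat_add)
    then show ?thesis using h2 unfolding c_def by linarith
  qed
  have x2: "x (Suc (Suc (2 * k))) = x (Suc (2 * k)) / 2" for k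
    using codd[of k] by (simp add: xc)
  have x1: "x (Suc (2 * k)) \<ge> 1 / 4" if "k \<ge> 1" for k
  proof -
    have "(2::real) \<le> 2 ^ (2 * k)"
    proof -
      have "(2::real) ^ 1 \<le> 2 ^ (2 * k)" by (rule power_increasing) (use that in auto)
      then show ?thesis by simp
    qed
    moreover have "c (2 * k) \<ge> 0" by (simp add: c_def)
    moreover have "(2::real) ^ Suc (2 * k) = 2 * 2 ^ (2 * k)" by simp
    ultimately have "2 ^ Suc (2 * k) / 4 \<le> c (Suc (2 * k))" using ceven[of k] by linarith
    then have f1: "1 / 4 * 2 ^ Suc (2 * k) \<le> c (Suc (2 * k))" by linarith
    have tp: "(0::real) < 2 ^ Suc (2 * k)" by simp
    have "1 / 4 \<le> c (Suc (2 * k)) / 2 ^ Suc (2 * k)"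
      using pos_le_divide_eq[OF tp, of "1/4" "c (Suc (2 * k))"] f1 by blast
    then show ?thesis using xc[of "Suc (2 * k)"] by simp
  qed
  have sm1: "strict_mono (\<lambda>k::nat. 2 ^ Suc (2 * k) :: nat)"
    unfolding strict_mono_Suc_iff by simp
  have sm2: "strict_mono (\<lambda>k::nat. 2 ^ Suc (Suc (2 * k)) :: nat)"
    unfolding strict_mono_Suc_iff by simp
  have l1: "(\<lambda>k. x (Suc (2 * k))) \<longlonglongrightarrow> L"
    using LIMSEQ_subseq_LIMSEQ[OF L sm1] by (simp add: x_def o_def)
  have l2: "(\<lambda>k. x (Suc (Suc (2 * k)))) \<longlonglongrightarrow> L"
    using LIMSEQ_subseq_LIMSEQ[OF L sm2] by (simp add: x_def o_def)
  have "(\<lambda>k. x (Suc (2 * k)) - x (Suc (Suc (2 * k)))) \<longlonglongrightarrow> L - L"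
    by (intro tendsto_diff l1 l2)
  moreover have "\<exists>N. \<forall>k\<ge>N. 1 / 8 \<le> x (Suc (2 * k)) - x (Suc (Suc (2 * k)))"
  proof (intro exI[of _ 1] allI impI)
    fix k :: nat assume "k \<ge> 1"
    then show "1 / 8 \<le> x (Suc (2 * k)) - x (Suc (Suc (2 * k)))"
      using x1[of k] x2[of k] by simp
  qed
  ultimately have "1 / 8 \<le> L - L" by (rule LIMSEQ_le_const)
  then show False by simp
qed

lemma part4: "\<exists>(\<Sigma>::nat set) (w::nat \<Rightarrow> nat). card \<Sigma> = 3 \<and> range w \<subseteq> \<Sigma> \<and>
        \<not> has_letter_frequencies \<Sigma> w \<and> \<not> weak_abelian_periodic \<Sigma> w"
proof (intro exI conjI)
  show "card {0, 1, 2::nat} = 3" by simp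
  show "range w4 \<subseteq> {0, 1, 2}" by (auto simp: w4_def)
  show "\<not> has_letter_frequencies {0, 1, 2} w4"
    unfolding has_letter_frequencies_def using w4_nonconv by blast
  show "\<not> weak_abelian_periodic {0, 1, 2} w4" by (rule w4p.not_wap) simp
qed

definition w1 :: "nat \<Rightarrow> nat" where
  "w1 n = (if \<exists>j. n = 2 ^ j then 1 else 0)"

interpretation w1p: pow2word w1 1
proof
  fix n
  show "w1 n = 1 \<longleftrightarrow> (\<exists>j. n = 2 ^ j)" by (simp add: w1_def)
qed

lemma part1: "\<exists>(\<Sigma>::nat set) (w::nat \<Rightarrow> nat). finite \<Sigma> \<and> range w \<subseteq> \<Sigma> \<and>
        (\<forall>a\<in>\<Sigma>. \<exists>r\<in>\<rat>. (\<lambda>n. rho a (pref n w)) \<longlonglongrightarrow> r) \<and>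
        \<not> weak_abelian_periodic \<Sigma> w"
proof (intro exI conjI)
  show "finite {0, 1::nat}" by simp
  show "range w1 \<subseteq> {0, 1}" by (auto simp: w1_def)
  have r1: "(\<lambda>n. rho 1 (pref n w1)) \<longlonglongrightarrow> 0" by (rule w1p.rho_to_0)
  have "(\<lambda>n. 1 - rho 1 (pref n w1)) \<longlonglongrightarrow> 1 - 0" by (intro tendsto_diff tendsto_const r1)
  then have lim1: "(\<lambda>n. 1 - rho 1 (pref n w1)) \<longlonglongrightarrow> 1" by simp
  have ev: "\<forall>\<^sub>F n in sequentially. 1 - rho 1 (pref n w1) = rho 0 (pref n w1)"
    unfolding eventually_sequentially
  proof (intro exI[of _ 1] allI impI)
    fix n :: nat assume "n \<ge> 1"
    have "set (pref n w1) \<subseteq> {0, 1}" by (auto simp: pref_def w1_def)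
    then have "count_list (pref n w1) 0 + count_list (pref n w1) 1 = n"
      using count_two[of "pref n w1" 0 1] by simp
    then have "real (count_list (pref n w1) 0) = real n - real (count_list (pref n w1) 1)" by simp
    then show "1 - rho 1 (pref n w1) = rho 0 (pref n w1)" using \<open>n \<ge> 1\<close>
      by (simp add: rho_def field_simps)
  qed
  have r0: "(\<lambda>n. rho 0 (pref n w1)) \<longlonglongrightarrow> 1"
    by (rule Lim_transform_eventually[OF lim1 ev])
  show "\<forall>a\<in>{0, 1}. \<exists>r\<in>\<rat>. (\<lambda>n. rho a (pref n w1)) \<longlonglongrightarrow> r"
    using r0 r1 by auto
  show "\<not> weak_abelian_periodic {0, 1} w1" by (rule w1p.not_wap) simp
qed


lemma part2: "\<forall>(\<Sigma>::'a set) (w::nat \<Rightarrow> 'a) a r. finite \<Sigma> \<and> range w \<subseteq> \<Sigma> \<and> a \<in> \<Sigma> \<and>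
        (\<lambda>n. rho a (pref n w)) \<longlonglongrightarrow> r \<and> r \<notin> \<rat> \<longrightarrow>
        \<not> weak_abelian_periodic \<Sigma> w"
proof (intro allI impI notI)
  fix \<Sigma> :: "'a set" and w :: "nat \<Rightarrow> 'a" and a r
  assume H: "finite \<Sigma> \<and> range w \<subseteq> \<Sigma> \<and> a \<in> \<Sigma> \<and> (\<lambda>n. rho a (pref n w)) \<longlonglongrightarrow> r \<and> r \<notin> \<rat>"
    and W: "weak_abelian_periodic \<Sigma> w"
  from H have aS: "a \<in> \<Sigma>" and lim: "(\<lambda>n. rho a (pref n w)) \<longlonglongrightarrow> r" and nr: "r \<notin> \<rat>" by auto
  from W obtain v where v1: "\<forall>i\<ge>1. v i \<noteq> []"
    and v2: "\<forall>n. pref (length (concat (map v [0..<n]))) w = concat (map v [0..<n])"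
    and v3a: "\<forall>c\<in>\<Sigma>. \<forall>i\<ge>1. \<forall>j\<ge>1. rho c (v i) = rho c (v j)"
    unfolding weak_abelian_periodic_def by (elim exE conjE)
  have v3: "\<forall>i\<ge>1. \<forall>j\<ge>1. rho a (v i) = rho a (v j)" using v3a aS by (rule bspec)
  have "r = rho a (v 1)" by (rule wap_limit[OF v1 v2 v3 lim])
  then show False using rho_rat[of a "v 1"] nr by simp
qed

lemma part3: "\<forall>(\<Sigma>::'b set) (w::nat \<Rightarrow> 'b). card \<Sigma> = 2 \<and> range w \<subseteq> \<Sigma> \<and>
        \<not> has_letter_frequencies \<Sigma> w \<longrightarrow> weak_abelian_periodic \<Sigma> w"
proof (intro allI impI)
  fix \<Sigma> :: "'b set" and w :: "nat \<Rightarrow> 'b"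
  assume H: "card \<Sigma> = 2 \<and> range w \<subseteq> \<Sigma> \<and> \<not> has_letter_frequencies \<Sigma> w"
  then obtain x y where S: "\<Sigma> = {x, y}" and xy: "x \<noteq> y" by (auto simp: card_2_iff)
  from H obtain a where aS: "a \<in> \<Sigma>" and nc: "\<not> convergent (\<lambda>n. rho a (pref n w))"
    unfolding has_letter_frequencies_def by blast
  have rw: "range w \<subseteq> {x, y}" using H S by simp
  show "weak_abelian_periodic \<Sigma> w"
  proof (cases "a = x")
    case True
    then show ?thesis using binary_wap[OF xy rw] nc S by simp
  next
    case False
    then have "a = y" using aS S by simp
    moreover have "range w \<subseteq> {y, x}" using rw by auto
    ultimately have "weak_abelian_periodic {y, x} w" using binary_wap[of y x w] xy nc by simp
    then show ?thesis using S by (simp add: insert_commute)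
  qed
qed

theorem proposition3:
  shows
   "(\<exists>(\<Sigma>::nat set) (w::nat \<Rightarrow> nat). finite \<Sigma> \<and> range w \<subseteq> \<Sigma> \<and>
        (\<forall>a\<in>\<Sigma>. \<exists>r\<in>\<rat>. (\<lambda>n. rho a (pref n w)) \<longlonglongrightarrow> r) \<and>
        \<not> weak_abelian_periodic \<Sigma> w)
    \<and>
    (\<forall>(\<Sigma>::'a set) (w::nat \<Rightarrow> 'a) a r. finite \<Sigma> \<and> range w \<subseteq> \<Sigma> \<and> a \<in> \<Sigma> \<and>
        (\<lambda>n. rho a (pref n w)) \<longlonglongrightarrow> r \<and> r \<notin> \<rat> \<longrightarrow>
        \<not> weak_abelian_periodic \<Sigma> w)
    \<and>
    (\<forall>(\<Sigma>::'b set) (w::nat \<Rightarrow> 'b). card \<Sigma> = 2 \<and> range w \<subseteq> \<Sigma> \<and>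
        \<not> has_letter_frequencies \<Sigma> w \<longrightarrow> weak_abelian_periodic \<Sigma> w)
    \<and>
    (\<exists>(\<Sigma>::nat set) (w::nat \<Rightarrow> nat). card \<Sigma> = 3 \<and> range w \<subseteq> \<Sigma> \<and>
        \<not> has_letter_frequencies \<Sigma> w \<and> \<not> weak_abelian_periodic \<Sigma> w)"
    by (intro conjI part1 part2 part3 part4)

end
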